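(* Let $d\geq 1$, let $p_1<p_2<\dots<p_d$ be the first $d$ prime numbers, let $N\geq 1$ be an integer, and let $C>1$ and $\sigma\in\mathbb{R}$. Let $\mathbf{S}_1$ be the $(d+1)\times d$ real matrix whose $i$-th column ($1\le i\le d$) has entry $\ln p_i$ in row $i$, entry $C\ln p_i$ in row $d+1$, and zeros elsewhere, and let $\mathbf{t}=(0,\dots,0,C\ln N)^T\in\mathbb{R}^{d+1}$. Let $\mathbf{z}=(z_1,\dots,z_d)\in\mathbb{Z}^{d}$ and put $$u=\prod_{1\le i\le d,\ z_i>0}p_i^{z_i},\qquad k=\prod_{1\le i\le d,\ z_i<0}p_i^{-z_i}.$$ If $$\|\mathbf{S}_1\mathbf{z}-\mathbf{t}\|_1\leq 2\ln C+2\sigma\ln p_d-\ln N,$$ then $|u-kN|\leq p_d^{\sigma}$.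
   Context: $\ln$ denotes the natural logarithm and $\|\cdot\|_1$ the $\ell^1$ norm on $\mathbb{R}^{d+1}$. Empty products equal $1$. *)

theory Defs
  imports Complex_Main "HOL-Library.Infinite_Set" "HOL-Computational_Algebra.Primes"
begin

text \<open>The i-th prime, 1-indexed: nth_prime 1 = 2, nth_prime 2 = 3, ...\<close>
definition nth_prime :: "nat \<Rightarrow> nat" where
  "nth_prime i = enumerate {q::nat. prime q} (i - 1)"

definition S1 :: "nat \<Rightarrow> real \<Rightarrow> nat \<Rightarrow> nat \<Rightarrow> real" where
  "S1 d C r j = (if r = j then ln (nth_prime j)
                 else if r = d + 1 then C * ln (nth_prime j) else 0)"

definition tvec :: "nat \<Rightarrow> real \<Rightarrow> nat \<Rightarrow> nat \<Rightarrow> real" where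
  "tvec d C N r = (if r = d + 1 then C * ln (real N) else 0)"

definition l1_dist :: "nat \<Rightarrow> real \<Rightarrow> nat \<Rightarrow> (nat \<Rightarrow> int) \<Rightarrow> real" where
  "l1_dist d C N z = (\<Sum>r=1..d+1. \<bar>(\<Sum>j=1..d. S1 d C r j * real_of_int (z j)) - tvec d C N r\<bar>)"

end

theory Submission imports Defs begin
lemma key:
  fixes b s :: real assumes b: "b > 0" and s: "0 < s" "s < 1"
  shows "ln (1 + 2*b) + ln (1 - s) + b * ln s \<le> 0"
proof -
  have h1: "ln ((1-s)*(b+1)) \<le> (1-s)*(b+1) - 1" using s b by (intro ln_le_minus_one) auto
  have h2: "ln (s*(b+1)/b) \<le> s*(b+1)/b - 1" using s b by (intro ln_le_minus_one) auto
  have h3: "ln (1 + b/(1+b)) \<le> b/(1+b)" using b by (intro ln_add_one_self_le_self) auto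
  have h4: "ln (b/(b+1)) \<le> b/(b+1) - 1" using b by (intro ln_le_minus_one) auto
  have e1: "ln ((1-s)*(b+1)) = ln (1-s) + ln (b+1)" using s b by (simp add: ln_mult)
  have e2: "ln (s*(b+1)/b) = ln s + ln (b+1) - ln b" using s b by (simp add: ln_mult ln_div)
  have e3: "1 + b/(1+b) = (1+2*b)/(1+b)" using b by (simp add: field_simps)
  have e3': "ln ((1+2*b)/(1+b)) = ln (1+2*b) - ln (1+b)" using b by (simp add: ln_div)
  have e4: "ln (b/(b+1)) = ln b - ln (b+1)" using b by (simp add: ln_div)
  have h2': "b * ln s + b * ln (b+1) - b * ln b \<le> s*(b+1) - b"
  proof -
    have "b * ln (s*(b+1)/b) \<le> b * (s*(b+1)/b - 1)" using h2 b by (simp add: mult_left_mono)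
    also have "b * (s*(b+1)/b - 1) = s*(b+1) - b" using b by (simp add: field_simps)
    finally show ?thesis unfolding e2 by (simp add: algebra_simps)
  qed
  have h4': "b * ln b - b * ln (b+1) \<le> - (b/(1+b))"
  proof -
    have "b * ln (b/(b+1)) \<le> b * (b/(b+1) - 1)" using h4 b by (simp add: mult_left_mono)
    also have "b * (b/(b+1) - 1) = - (b/(1+b))" using b by (simp add: field_simps)
    finally show ?thesis unfolding e4 by (simp add: algebra_simps)
  qed
  have h1': "ln (1-s) + ln (b+1) \<le> (1-s)*(b+1) - 1" using h1 e1 by simp
  have h3': "ln (1+2*b) - ln (1+b) \<le> b/(1+b)" using h3 e3 e3' by simp
  have "ln (b+1) = ln (1+b)" by (simp add: add.commute)
  then show ?thesis using h1' h2' h3' h4' by (simp add: algebra_simps)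
qed
lemma one_side:
  fixes u K C A :: real
  assumes u: "u > 0" and K: "K > 0" and C: "C > 1" and A: "A > 0" and le: "K \<le> u"
    and h: "ln u + ln K + C * \<bar>ln u - ln K\<bar> \<le> 2 * ln C + 2 * ln A"
  shows "\<bar>u - K\<bar> \<le> A"
proof (cases "K = u")
  case True then show ?thesis using A by simp
next
  case False
  with le have lt: "K < u" by simp
  define s where "s = K / u"
  define b where "b = (C - 1) / 2"
  have s0: "0 < s" "s < 1" using u K lt by (auto simp: s_def)
  have b0: "b > 0" using C by (simp add: b_def)
  have Cb: "1 + 2*b = C" by (simp add: b_def field_simps)
  have lns: "ln s = ln K - ln u" using u K by (simp add: s_def ln_div)
  have "ln K \<le> ln u" using lt K by simp
  then have ab: "\<bar>ln u - ln K\<bar> = ln u - ln K" by simp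
  have k: "ln C + ln (1 - s) + b * (ln K - ln u) \<le> 0" using key[OF b0 s0] Cb lns by simp
  have "ln u + ln K + C * (ln u - ln K) \<le> 2 * ln C + 2 * ln A" using h ab by simp
  then have "ln u + b * (ln u - ln K) \<le> ln C + ln A" unfolding b_def by (simp add: field_simps)
  with k have "ln u + ln (1 - s) \<le> ln A" by (simp add: algebra_simps)
  then have "ln (u * (1 - s)) \<le> ln A" using u s0 by (simp add: ln_mult)
  then have "u * (1 - s) \<le> A" using u s0 A by simp
  moreover have "u * (1 - s) = u - K" using u by (simp add: s_def field_simps)
  ultimately show ?thesis using lt by simp
qed

lemma both_sides:
  fixes u K C A :: real
  assumes u: "u > 0" and K: "K > 0" and C: "C > 1" and A: "A > 0"
    and h: "ln u + ln K + C * \<bar>ln u - ln K\<bar> \<le> 2 * ln C + 2 * ln A"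
  shows "\<bar>u - K\<bar> \<le> A"
proof (cases "K \<le> u")
  case True show ?thesis using one_side[OF u K C A True h] .
next
  case False
  have h': "ln K + ln u + C * \<bar>ln K - ln u\<bar> \<le> 2 * ln C + 2 * ln A" using h by (simp add: abs_minus_commute add.commute)
  have "\<bar>K - u\<bar> \<le> A" using one_side[OF K u C A _ h'] False by simp
  then show ?thesis by (simp add: abs_minus_commute)
qed
lemma nth_prime_prime: "prime (nth_prime i)"
  unfolding nth_prime_def using enumerate_in_set[OF primes_infinite] by simp

lemma ln_prod_pow:
  fixes z :: "nat \<Rightarrow> int" and A :: "nat set"
  assumes "finite A"
  shows "ln (real (\<Prod>i\<in>A. nth_prime i ^ nat (f i))) = (\<Sum>i\<in>A. real (nat (f i)) * ln (real (nth_prime i)))"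
proof -
  have pos: "\<And>i. real (nth_prime i) > 0" using nth_prime_prime prime_gt_0_nat by simp
  have "ln (real (\<Prod>i\<in>A. nth_prime i ^ nat (f i))) = ln (\<Prod>i\<in>A. real (nth_prime i) ^ nat (f i))"
    by simp
  also have "\<dots> = (\<Sum>i\<in>A. ln (real (nth_prime i) ^ nat (f i)))"
    using assms pos by (simp add: ln_prod)
  also have "\<dots> = (\<Sum>i\<in>A. real (nat (f i)) * ln (real (nth_prime i)))"
    using pos by (simp add: ln_realpow)
  finally show ?thesis .
qed

theorem theorem2:
  fixes d N :: nat and C \<sigma> :: real and z :: "nat \<Rightarrow> int"
  assumes "d \<ge> 1" and "N \<ge> 1" and "C > 1"
    and "l1_dist d C N z \<le> 2 * ln C + 2 * \<sigma> * ln (nth_prime d) - ln N"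
  shows "\<bar>real (\<Prod>i\<in>{i\<in>{1..d}. z i > 0}. nth_prime i ^ nat (z i))
           - real (\<Prod>i\<in>{i\<in>{1..d}. z i < 0}. nth_prime i ^ nat (- z i)) * real N\<bar>
         \<le> real (nth_prime d) powr \<sigma>"
proof -
  define L where "L i = ln (real (nth_prime i))" for i
  define U where "U = (\<Prod>i\<in>{i\<in>{1..d}. z i > 0}. nth_prime i ^ nat (z i))"
  define Kk where "Kk = (\<Prod>i\<in>{i\<in>{1..d}. z i < 0}. nth_prime i ^ nat (- z i))"
  have pos: "\<And>i. nth_prime i > 0" using nth_prime_prime prime_gt_0_nat by simp
  have L0: "L i \<ge> 0" for i unfolding L_def using pos[of i] by (simp add: Suc_le_eq)
  have U0: "real U > 0" unfolding U_def using pos by (simp add: prod_pos)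
  have K0: "real Kk > 0" unfolding Kk_def using pos by (simp add: prod_pos)
  have lnU: "ln (real U) = (\<Sum>i=1..d. if z i > 0 then L i * of_int (z i) else 0)"
  proof -
    have "ln (real U) = (\<Sum>i\<in>{i\<in>{1..d}. z i > 0}. real (nat (z i)) * ln (real (nth_prime i)))"
      unfolding U_def by (rule ln_prod_pow) simp
    also have "\<dots> = (\<Sum>i=1..d. if z i > 0 then L i * of_int (z i) else 0)"
      by (subst sum.inter_filter) (auto simp: L_def intro!: sum.cong)
    finally show ?thesis .
  qed
  have lnK: "ln (real Kk) = (\<Sum>i=1..d. if z i < 0 then - L i * of_int (z i) else 0)"
  proof -
    have "ln (real Kk) = (\<Sum>i\<in>{i\<in>{1..d}. z i < 0}. real (nat (- z i)) * ln (real (nth_prime i)))"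
      unfolding Kk_def by (rule ln_prod_pow) simp
    also have "\<dots> = (\<Sum>i=1..d. if z i < 0 then - L i * of_int (z i) else 0)"
      by (subst sum.inter_filter) (auto simp: L_def intro!: sum.cong)
    finally show ?thesis .
  qed
  have row: "(\<Sum>j=1..d. S1 d C r j * real_of_int (z j)) = L r * of_int (z r)" if "r \<in> {1..d}" for r
  proof -
    have "(\<Sum>j=1..d. S1 d C r j * real_of_int (z j)) = (\<Sum>j=1..d. if j = r then L r * of_int (z r) else 0)"
      using that by (intro sum.cong) (auto simp: S1_def L_def)
    also have "\<dots> = L r * of_int (z r)" using that by simp
    finally show ?thesis .
  qed
  have last: "(\<Sum>j=1..d. S1 d C (d+1) j * real_of_int (z j)) = C * (\<Sum>j=1..d. L j * of_int (z j))"
    by (simp add: sum_distrib_left S1_def L_def mult.assoc)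
  have s1: "(\<Sum>r=1..d. \<bar>L r * of_int (z r)\<bar>) = ln (real U) + ln (real Kk)"
    unfolding lnU lnK sum.distrib[symmetric] using L0
    by (intro sum.cong) (auto simp: abs_mult)
  have s2: "(\<Sum>j=1..d. L j * of_int (z j)) = ln (real U) - ln (real Kk)"
    unfolding lnU lnK sum_subtractf[symmetric] by (intro sum.cong) auto
  have "l1_dist d C N z = (\<Sum>r=1..d. \<bar>L r * of_int (z r)\<bar>) + \<bar>C * (\<Sum>j=1..d. L j * of_int (z j)) - C * ln (real N)\<bar>"
    unfolding l1_dist_def using row last
    by (simp add: sum.cl_ivl_Suc tvec_def)
  also have "\<bar>C * (\<Sum>j=1..d. L j * of_int (z j)) - C * ln (real N)\<bar> = C * \<bar>ln (real U) - (ln (real Kk) + ln (real N))\<bar>"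
    using assms(3) unfolding s2 right_diff_distrib[symmetric] abs_mult by (simp add: diff_diff_eq)
  finally have l1: "l1_dist d C N z = ln (real U) + ln (real Kk) + C * \<bar>ln (real U) - (ln (real Kk) + ln (real N))\<bar>"
    using s1 by simp
  define K where "K = real Kk * real N"
  have N0: "real N > 0" using assms(2) by simp
  have lnKe: "ln K = ln (real Kk) + ln (real N)" unfolding K_def using K0 N0 by (simp add: ln_mult)
  define A where "A = real (nth_prime d) powr \<sigma>"
  have A0: "A > 0" unfolding A_def using pos[of d] by simp
  have lnA: "ln A = \<sigma> * ln (real (nth_prime d))" unfolding A_def using pos[of d] by (simp add: ln_powr)
  have h: "ln (real U) + ln K + C * \<bar>ln (real U) - ln K\<bar> \<le> 2 * ln C + 2 * ln A"
    using assms(4) unfolding l1 lnKe lnA by simp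
  have "\<bar>real U - K\<bar> \<le> A"
    by (rule both_sides[OF U0 _ assms(3) A0 h]) (use K0 N0 in \<open>simp add: K_def\<close>)
  then show ?thesis unfolding U_def Kk_def K_def A_def .
qed
end
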